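(* Let $\Gamma$ be a simple graph on $m$ vertices labeled $1,\dots,m$ and with $n$ edges, and give the edges the NBC labeling. Then every increasing $\Gamma$-forest contains no broken cycle (i.e. is an NBC forest).
   Context: NBC labeling: write each edge as $(i,j)$ with $i<j$; the edges are labeled $1,\dots,n$ so that edges with smaller vertex sum $i+j$ receive larger labels (the edge of smallest sum gets label $n$), and if two edges $(i_1,j_1),(i_2,j_2)$ have the same sum, the one with larger second vertex ($j_1>j_2$) receives the smaller label. A broken cycle is the edge set of a cycle of $\Gamma$ minus its edge of largest label. A tree in $\Gamma$ is increasing if it is rooted at its smallest-labeled vertex and every path from the root to a leaf passes through vertices with increasing labels; a $\Gamma$-forest (a forest subgraph of $\Gamma$) is increasing if each of its trees is increasing. *)

theory Defs
  imports Main
begin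

definition simple_graph :: "nat \<Rightarrow> (nat \<times> nat) set \<Rightarrow> bool" where
  "simple_graph m E \<longleftrightarrow> E \<subseteq> {(i,j). 1 \<le> i \<and> i < j \<and> j \<le> m}"

definition nbc_less :: "nat \<times> nat \<Rightarrow> nat \<times> nat \<Rightarrow> bool" where
  "nbc_less e1 e2 \<longleftrightarrow>
     fst e1 + snd e1 > fst e2 + snd e2 \<or>
     (fst e1 + snd e1 = fst e2 + snd e2 \<and> snd e1 > snd e2)"

definition nbc_label :: "(nat \<times> nat) set \<Rightarrow> nat \<times> nat \<Rightarrow> nat" where
  "nbc_label E e = card {e' \<in> E. nbc_less e' e} + 1"

definition adj :: "(nat \<times> nat) set \<Rightarrow> nat \<Rightarrow> nat \<Rightarrow> bool" where
  "adj F u v \<longleftrightarrow> (u, v) \<in> F \<or> (v, u) \<in> F"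

definition edge_of :: "nat \<Rightarrow> nat \<Rightarrow> nat \<times> nat" where
  "edge_of u v = (min u v, max u v)"

definition is_path :: "(nat \<times> nat) set \<Rightarrow> nat list \<Rightarrow> bool" where
  "is_path F p \<longleftrightarrow> p \<noteq> [] \<and> distinct p \<and>
     (\<forall>i. Suc i < length p \<longrightarrow> adj F (p ! i) (p ! Suc i))"

definition is_cycle :: "(nat \<times> nat) set \<Rightarrow> nat list \<Rightarrow> bool" where
  "is_cycle F vs \<longleftrightarrow> length vs \<ge> 3 \<and> distinct vs \<and>
     (\<forall>i < length vs. adj F (vs ! i) (vs ! ((i + 1) mod length vs)))"

definition cycle_edges :: "nat list \<Rightarrow> (nat \<times> nat) set" where
  "cycle_edges vs = {edge_of (vs ! i) (vs ! ((i + 1) mod length vs)) | i. i < length vs}"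

definition broken_cycle :: "(nat \<times> nat) set \<Rightarrow> (nat \<times> nat) set \<Rightarrow> bool" where
  "broken_cycle E B \<longleftrightarrow> (\<exists>vs e. is_cycle E vs \<and> e \<in> cycle_edges vs \<and>
     (\<forall>e' \<in> cycle_edges vs. nbc_label E e' \<le> nbc_label E e) \<and>
     B = cycle_edges vs - {e})"

definition is_forest :: "(nat \<times> nat) set \<Rightarrow> (nat \<times> nat) set \<Rightarrow> bool" where
  "is_forest E F \<longleftrightarrow> F \<subseteq> E \<and> \<not> (\<exists>vs. is_cycle F vs)"

text \<open>Each tree (connected component of F on {1..m}) is rooted at its smallest
  vertex, and every path starting from the root is increasing.\<close>
definition increasing_forest :: "nat \<Rightarrow> (nat \<times> nat) set \<Rightarrow> (nat \<times> nat) set \<Rightarrow> bool" where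
  "increasing_forest m E F \<longleftrightarrow> is_forest E F \<and>
     (\<forall>r \<in> {1..m}. (\<forall>w. (adj F)\<^sup>*\<^sup>* r w \<longrightarrow> r \<le> w) \<longrightarrow>
        (\<forall>p. is_path F p \<and> hd p = r \<longrightarrow> sorted_wrt (<) p))"

definition nbc_forest :: "(nat \<times> nat) set \<Rightarrow> (nat \<times> nat) set \<Rightarrow> bool" where
  "nbc_forest E F \<longleftrightarrow> \<not> (\<exists>B. broken_cycle E B \<and> B \<subseteq> F)"

end

theory Submission
  imports Defs
begin

lemma adj_sym: "adj F u v \<Longrightarrow> adj F v u" by (auto simp: adj_def)

lemma rtc_sym: "(adj F)\<^sup>*\<^sup>* x y \<Longrightarrow> (adj F)\<^sup>*\<^sup>* y x"
  by (induction rule: rtranclp_induct) (auto intro: converse_rtranclp_into_rtranclp adj_sym)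

lemma path_exists: "(adj F)\<^sup>*\<^sup>* x y \<Longrightarrow> \<exists>p. is_path F p \<and> hd p = x \<and> last p = y"
proof (induction rule: converse_rtranclp_induct)
  case base
  show ?case by (rule exI[of _ "[y]"]) (simp add: is_path_def)
next
  case (step x z)
  then obtain p where p: "is_path F p" "hd p = z" "last p = y" by blast
  show ?case
  proof (cases "x \<in> set p")
    case True
    then obtain k where k: "k < length p" "p!k = x" by (meson in_set_conv_nth)
    have "is_path F (drop k p)" unfolding is_path_def
    proof (intro conjI allI impI)
      show "drop k p \<noteq> []" using k by simp
      show "distinct (drop k p)" using p(1) by (simp add: is_path_def distinct_drop)
      fix i assume "Suc i < length (drop k p)"
      then have "Suc (k + i) < length p" by simp
      then have "adj F (p ! (k+i)) (p ! Suc (k+i))" using p(1) by (simp add: is_path_def)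
      then show "adj F (drop k p ! i) (drop k p ! Suc i)" using k by (simp add: nth_drop)
    qed
    moreover have "hd (drop k p) = x" using k by (simp add: hd_drop_conv_nth)
    moreover have "last (drop k p) = y" using k p by (simp add: last_drop)
    ultimately show ?thesis by blast
  next
    case False
    have pne: "p \<noteq> []" using p(1) by (simp add: is_path_def)
    have "is_path F (x # p)" unfolding is_path_def
    proof (intro conjI allI impI)
      show "x # p \<noteq> []" by simp
      show "distinct (x # p)" using p(1) False by (simp add: is_path_def)
      fix i assume i: "Suc i < length (x # p)"
      show "adj F ((x # p) ! i) ((x # p) ! Suc i)"
      proof (cases i)
        case 0
        then show ?thesis using step(1) p(2) pne by (simp add: hd_conv_nth)
      next
        case (Suc i')
        then show ?thesis using i p(1) by (simp add: is_path_def)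
      qed
    qed
    then show ?thesis using p pne by auto
  qed
qed

lemma path_append:
  assumes "distinct a" "\<forall>i. Suc i < length a \<longrightarrow> adj F (a!i) (a!Suc i)"
    "is_path F b" "set a \<inter> set b = {}" "a \<noteq> [] \<longrightarrow> adj F (last a) (hd b)"
  shows "is_path F (a @ b)"
  unfolding is_path_def
proof (intro conjI allI impI)
  show "a @ b \<noteq> []" using assms(3) by (simp add: is_path_def)
  show "distinct (a @ b)" using assms by (simp add: is_path_def)
  fix i assume i: "Suc i < length (a @ b)"
  consider "Suc i < length a" | "Suc i = length a" | "Suc i > length a" by linarith
  then show "adj F ((a @ b) ! i) ((a @ b) ! Suc i)"
  proof cases
    case 1
    then show ?thesis using assms(2) by (simp add: nth_append)
  next
    case 2
    then have "a \<noteq> []" by auto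
    then have "adj F (last a) (hd b)" using assms(5) by simp
    moreover have "b \<noteq> []" using assms(3) by (simp add: is_path_def)
    moreover have "last a = a ! i" by (metis 2 \<open>a \<noteq> []\<close> diff_Suc_1 last_conv_nth)
    ultimately show ?thesis using 2 by (simp add: nth_append hd_conv_nth)
  next
    case 3
    then have "Suc (i - length a) < length b" "Suc i - length a = Suc (i - length a)" using i by auto
    then show ?thesis using 3 assms(3) by (simp add: nth_append is_path_def)
  qed
qed

lemma rtc_range:
  assumes Fv: "\<forall>(a,b)\<in>F. 1 \<le> a \<and> a \<le> m \<and> 1 \<le> b \<and> b \<le> m"
  shows "(adj F)\<^sup>*\<^sup>* x y \<Longrightarrow> y = x \<or> y \<in> {1..m}"
  by (induction rule: rtranclp_induct) (use Fv in \<open>auto simp: adj_def\<close>)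

lemma key:
  assumes Fv: "\<forall>(a,b)\<in>F. 1 \<le> a \<and> a \<le> m \<and> 1 \<le> b \<and> b \<le> m"
    and inc: "\<forall>r\<in>{1..m}. (\<forall>w. (adj F)\<^sup>*\<^sup>* r w \<longrightarrow> r \<le> w) \<longrightarrow>
        (\<forall>p. is_path F p \<and> hd p = r \<longrightarrow> sorted_wrt (<) p)"
    and dU: "distinct U" and LU: "length U \<ge> 3"
    and adjU: "\<forall>t. Suc t < length U \<longrightarrow> adj F (U!t) (U!Suc t)"
  shows "\<exists>t. Suc t < length U \<and> U!t + U!Suc t < U!0 + U!(length U - 1)"
proof -
  define L where "L = length U"
  define c0 where "c0 = U!0"
  have Une: "U \<noteq> []" using LU by (cases U) auto
  have "adj F (U!0) (U!1)" using adjU LU by auto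
  then have c0m: "c0 \<in> {1..m}" using Fv unfolding c0_def adj_def by auto
  define comp where "comp = {w. (adj F)\<^sup>*\<^sup>* c0 w}"
  have compsub: "comp \<subseteq> {1..m}" using rtc_range[OF Fv] c0m unfolding comp_def by blast
  have fin: "finite comp" using compsub finite_subset by blast
  have c0in: "c0 \<in> comp" unfolding comp_def by simp
  define r where "r = Min comp"
  have rin: "r \<in> comp" using fin c0in unfolding r_def by (metis Min_in empty_iff)
  have rm: "r \<in> {1..m}" using rin compsub by blast
  have rmin: "\<forall>w. (adj F)\<^sup>*\<^sup>* r w \<longrightarrow> r \<le> w"
  proof (intro allI impI)
    fix w assume "(adj F)\<^sup>*\<^sup>* r w"
    then have "w \<in> comp" using rin unfolding comp_def by auto
    then show "r \<le> w" using fin unfolding r_def by simp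
  qed
  have sortedall: "\<And>p. is_path F p \<Longrightarrow> hd p = r \<Longrightarrow> sorted_wrt (<) p"
    using inc rm rmin by blast
  have "(adj F)\<^sup>*\<^sup>* r c0" using rin rtc_sym unfolding comp_def by blast
  then obtain p where p: "is_path F p" "hd p = r" "last p = c0" using path_exists by blast
  have pne: "p \<noteq> []" using p(1) by (simp add: is_path_def)
  have "\<exists>k. k < length p \<and> p!k \<in> set U"
  proof -
    have "U!0 \<in> set U" using LU by (intro nth_mem) (cases U, auto)
    then have "last p \<in> set U" using p(3) unfolding c0_def by simp
    then show ?thesis using pne by (metis last_conv_nth diff_less length_greater_0_conv zero_less_one)
  qed
  then obtain k where k: "k < length p" "p!k \<in> set U" "\<forall>i<k. p!i \<notin> set U"
  proof -
    obtain k where "k < length p \<and> p!k \<in> set U" using \<open>\<exists>k. k < length p \<and> p!k \<in> set U\<close> by blast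
    then have "\<exists>k. (k < length p \<and> p!k \<in> set U) \<and> (\<forall>i<k. \<not> (i < length p \<and> p!i \<in> set U))"
      using exists_least_iff[of "\<lambda>k. k < length p \<and> p!k \<in> set U"] by blast
    then show ?thesis using that by (meson less_trans)
  qed
  define c where "c = p!k"
  obtain j where j: "j < length U" "U!j = c" using k(2) unfolding c_def by (metis in_set_conv_nth)
  define Q where "Q = take k p"
  have pd: "distinct p" using p(1) by (simp add: is_path_def)
  have padj: "\<And>i. Suc i < length p \<Longrightarrow> adj F (p!i) (p!Suc i)" using p(1) by (simp add: is_path_def)
  have Qd: "distinct Q" using pd unfolding Q_def by simp
  have Qadj: "\<forall>i. Suc i < length Q \<longrightarrow> adj F (Q!i) (Q!Suc i)"
    using padj k(1) unfolding Q_def by auto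
  have QU: "set Q \<inter> set U = {}"
  proof -
    have "\<And>x. x \<in> set Q \<Longrightarrow> x \<notin> set U"
    proof -
      fix x assume "x \<in> set Q"
      then obtain i where "i < length Q" "Q!i = x" by (metis in_set_conv_nth)
      then show "x \<notin> set U" using k unfolding Q_def by auto
    qed
    then show ?thesis by blast
  qed
  have Qlast: "Q \<noteq> [] \<longrightarrow> adj F (last Q) c"
  proof
    assume "Q \<noteq> []"
    then have "k > 0" unfolding Q_def by auto
    then have "last Q = p!(k - 1)" unfolding Q_def using k(1)
      by (subst last_conv_nth) auto
    then show "adj F (last Q) c" using padj[of "k - 1"] k(1) \<open>k > 0\<close> unfolding c_def by simp
  qed
  have mk: "sorted_wrt (<) R" if R: "is_path F R" "hd R = c" "set R \<subseteq> set U" for R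
  proof -
    have "is_path F (Q @ R)"
      by (rule path_append[OF Qd Qadj R(1)]) (use QU R Qlast in auto)
    moreover have "hd (Q @ R) = r"
    proof (cases "k = 0")
      case True
      then have "Q = []" unfolding Q_def by simp
      moreover have "c = r" using True p(2) pne unfolding c_def by (simp add: hd_conv_nth)
      ultimately show ?thesis using R(2) by simp
    next
      case False
      then have "Q \<noteq> []" unfolding Q_def using pne by simp
      then have "hd Q = hd p" unfolding Q_def using False by (metis hd_take neq0_conv)
      then show ?thesis using p(2) \<open>Q \<noteq> []\<close> by simp
    qed
    ultimately have "sorted_wrt (<) (Q @ R)" using sortedall by blast
    then show ?thesis by (simp add: sorted_wrt_append)
  qed
  have R1: "is_path F (drop j U)" unfolding is_path_def
  proof (intro conjI allI impI)
    show "drop j U \<noteq> []" using j by simp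
    show "distinct (drop j U)" using dU by (simp add: distinct_drop)
    fix i assume "Suc i < length (drop j U)"
    then have "Suc (j + i) < length U" by simp
    then have "adj F (U ! (j+i)) (U ! Suc (j+i))" using adjU by simp
    then show "adj F (drop j U ! i) (drop j U ! Suc i)" using j by (simp add: nth_drop)
  qed
  have S1: "sorted_wrt (<) (drop j U)"
    by (rule mk[OF R1]) (use j in \<open>auto simp: hd_drop_conv_nth dest: in_set_dropD\<close>)
  have S1': "U!a < U!b" if "j \<le> a" "a < b" "b < length U" for a b
  proof -
    have "\<forall>i ja. i < ja \<longrightarrow> ja < length U - j \<longrightarrow> U ! (j + i) < U ! (j + ja)"
      using S1 by (simp add: sorted_wrt_iff_nth_less)
    moreover have "a - j < b - j" "b - j < length U - j" using that by auto
    ultimately have "U ! (j + (a - j)) < U ! (j + (b - j))" by blast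
    then show ?thesis using that by simp
  qed
  have R2: "is_path F (rev (take (Suc j) U))" unfolding is_path_def
  proof (intro conjI allI impI)
    show "rev (take (Suc j) U) \<noteq> []" using j Une by simp
    show "distinct (rev (take (Suc j) U))" using dU by simp
    fix i assume i: "Suc i < length (rev (take (Suc j) U))"
    then have i': "Suc i \<le> j" using j by simp
    then have "adj F (U ! (j - Suc i)) (U ! Suc (j - Suc i))" using adjU j by simp
    moreover have "Suc (j - Suc i) = j - i" using i' by simp
    ultimately have "adj F (U ! (j - i)) (U ! (j - Suc i))" using adj_sym by metis
    then show "adj F (rev (take (Suc j) U) ! i) (rev (take (Suc j) U) ! Suc i)"
      using i' j by (simp add: rev_nth)
  qed
  have S2: "sorted_wrt (<) (rev (take (Suc j) U))"
    by (rule mk[OF R2]) (use j in \<open>auto simp: hd_rev take_Suc_conv_app_nth dest: in_set_takeD\<close>)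
  have S2': "U!b < U!a" if "a < b" "b \<le> j" for a b
  proof -
    have "(rev (take (Suc j) U))!(j - b) < (rev (take (Suc j) U))!(j - a)"
      using S2 that j by (simp add: sorted_wrt_iff_nth_less)
    then show ?thesis using that j by (simp add: rev_nth)
  qed
  show ?thesis
  proof (cases "j = 0")
    case True
    have "U!1 < U!(length U - 1)" using S1'[of 1 "length U - 1"] True LU by simp
    then show ?thesis using LU by (intro exI[of _ 0]) simp
  next
    case False
    have a: "U!(j-1) \<le> U!0" using S2'[of 0 "j - 1"] False by (cases "j = 1") auto
    show ?thesis
    proof (cases "j = length U - 1")
      case True
      have "U!(j-1) < U!0" using S2'[of 0 "j - 1"] True LU by simp
      moreover have "U ! Suc (j - 1) = U!(length U - 1)" using True Suc_pred'[of j] False by (metis neq0_conv)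
      moreover have "Suc (j - 1) < length U" using j False by simp
      ultimately show ?thesis by (intro exI[of _ "j - 1"]) simp
    next
      case F2: False
      have "U!j < U!(length U - 1)" using S1'[of j "length U - 1"] F2 j by simp
      moreover have "U ! Suc (j - 1) = U!j" using Suc_pred'[of j] False by (metis neq0_conv)
      moreover have "Suc (j - 1) < length U" using j False by simp
      ultimately show ?thesis using a by (intro exI[of _ "j - 1"]) simp
    qed
  qed
qed

lemma edge_of_eq: "edge_of a b = edge_of c d \<Longrightarrow> a \<noteq> b \<Longrightarrow> (a = c \<and> b = d) \<or> (a = d \<and> b = c)"
  by (auto simp: edge_of_def min_def max_def split: if_splits)

lemma edge_of_adj: "edge_of u v \<in> F \<Longrightarrow> adj F u v"
  by (auto simp: edge_of_def adj_def min_def max_def split: if_splits)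

lemma adj_edge_of: "adj E u v \<Longrightarrow> \<forall>(a,b)\<in>E. a < b \<Longrightarrow> edge_of u v \<in> E"
  by (auto simp: edge_of_def adj_def min_def max_def split: if_splits)

lemma edge_of_sum: "fst (edge_of u v) + snd (edge_of u v) = u + v"
  by (simp add: edge_of_def)

lemma nbc_less_trans: "nbc_less a b \<Longrightarrow> nbc_less b c \<Longrightarrow> nbc_less a c"
  by (auto simp: nbc_less_def)

theorem lemma8p3:
  fixes m n :: nat and E F :: "(nat \<times> nat) set"
  assumes "simple_graph m E" and "card E = n"
    and "increasing_forest m E F"
  shows "nbc_forest E F"
  unfolding nbc_forest_def
proof
  assume "\<exists>B. broken_cycle E B \<and> B \<subseteq> F"
  then obtain vs e where cyc: "is_cycle E vs" and ein: "e \<in> cycle_edges vs"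
    and emax: "\<forall>e' \<in> cycle_edges vs. nbc_label E e' \<le> nbc_label E e"
    and BF: "cycle_edges vs - {e} \<subseteq> F"
    unfolding broken_cycle_def by blast
  have Esub: "E \<subseteq> {(i,j). 1 \<le> i \<and> i < j \<and> j \<le> m}" using assms(1) by (simp add: simple_graph_def)
  have finE: "finite E"
    by (rule finite_subset[OF _ finite_SigmaI[of "{1..m}" "\<lambda>_. {1..m}"]]) (use Esub in auto)
  have Eord: "\<forall>(a,b)\<in>E. a < b" using Esub by auto
  have FE: "F \<subseteq> E" and inc: "\<forall>r\<in>{1..m}. (\<forall>w. (adj F)\<^sup>*\<^sup>* r w \<longrightarrow> r \<le> w) \<longrightarrow>
        (\<forall>p. is_path F p \<and> hd p = r \<longrightarrow> sorted_wrt (<) p)"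
    using assms(3) by (auto simp: increasing_forest_def is_forest_def)
  have Fv: "\<forall>(a,b)\<in>F. 1 \<le> a \<and> a \<le> m \<and> 1 \<le> b \<and> b \<le> m" using FE Esub by auto
  define L where "L = length vs"
  have L3: "L \<ge> 3" and dvs: "distinct vs"
    and cadj: "\<forall>s<L. adj E (vs ! s) (vs ! ((s + 1) mod L))"
    using cyc unfolding is_cycle_def L_def by auto
  have cycE: "cycle_edges vs \<subseteq> E"
  proof
    fix x assume "x \<in> cycle_edges vs"
    then obtain s where "s < L" "x = edge_of (vs ! s) (vs ! ((s + 1) mod L))"
      unfolding cycle_edges_def L_def by blast
    then show "x \<in> E" using cadj Eord adj_edge_of by blast
  qed
  obtain i where i: "i < L" "e = edge_of (vs!i) (vs!((i+1) mod L))"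
    using ein unfolding cycle_edges_def L_def by blast
  define U where "U = rotate (Suc i) vs"
  have lenU: "length U = L" unfolding U_def L_def by simp
  have dU: "distinct U" unfolding U_def using dvs by simp
  have Unth: "\<And>t. t < L \<Longrightarrow> U!t = vs!((t + Suc i) mod L)"
    unfolding U_def L_def by (metis nth_rotate add.commute)
  have fin: "edge_of (U!t) (U!Suc t) \<in> cycle_edges vs" if "Suc t < L" for t
  proof -
    have "(Suc t + Suc i) mod L = ((t + Suc i) mod L + 1) mod L" by (simp add: mod_Suc_eq)
    then have "edge_of (U!t) (U!Suc t) = edge_of (vs ! ((t + Suc i) mod L)) (vs ! (((t + Suc i) mod L + 1) mod L))"
      using Unth that by simp
    moreover have "(t + Suc i) mod L < L" using L3 by simp
    ultimately show ?thesis unfolding cycle_edges_def L_def by blast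
  qed
  have Ulast: "U!(L - 1) = vs!i"
  proof -
    have "L - 1 + Suc i = L + i" using L3 by simp
    then have "(L - 1 + Suc i) mod L = i" using i(1) by simp
    then show ?thesis using Unth[of "L - 1"] L3 by simp
  qed
  have U0: "U!0 = vs!((i+1) mod L)" using Unth[of 0] L3 by simp
  have eU: "e = edge_of (U!(L - 1)) (U!0)" using i Ulast U0 by simp
  have adjU: "\<forall>t. Suc t < length U \<longrightarrow> adj F (U!t) (U!Suc t)"
  proof (intro allI impI)
    fix t assume t: "Suc t < length U"
    have ne: "edge_of (U!t) (U!Suc t) \<noteq> e"
    proof
      assume eq: "edge_of (U!t) (U!Suc t) = e"
      have "U!t \<noteq> U!Suc t" using dU t by (simp add: nth_eq_iff_index_eq)
      then have "(U!t = U!(L - 1) \<and> U!Suc t = U!0) \<or> (U!t = U!0 \<and> U!Suc t = U!(L - 1))"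
        using edge_of_eq eq eU by metis
      then show False using dU t lenU L3 by (auto simp: nth_eq_iff_index_eq)
    qed
    have "edge_of (U!t) (U!Suc t) \<in> F" using fin[of t] t lenU ne BF by auto
    then show "adj F (U!t) (U!Suc t)" by (rule edge_of_adj)
  qed
  obtain t where t: "Suc t < length U" "U!t + U!Suc t < U!0 + U!(length U - 1)"
    using key[OF Fv inc dU _ adjU] L3 lenU by auto
  define f where "f = edge_of (U!t) (U!Suc t)"
  have fcyc: "f \<in> cycle_edges vs" using fin t lenU unfolding f_def by simp
  have lt: "nbc_less e f"
    using t eU lenU unfolding nbc_less_def f_def by (simp add: edge_of_sum)
  have "nbc_label E f \<le> nbc_label E e" using emax fcyc by blast
  moreover have "nbc_label E e < nbc_label E f"
  proof -
    have "{e' \<in> E. nbc_less e' e} \<subset> {e' \<in> E. nbc_less e' f}"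
    proof
      show "{e' \<in> E. nbc_less e' e} \<subseteq> {e' \<in> E. nbc_less e' f}"
        using lt nbc_less_trans by blast
      have "e \<in> E" using ein cycE by blast
      moreover have "\<not> nbc_less e e" by (simp add: nbc_less_def)
      ultimately show "{e' \<in> E. nbc_less e' e} \<noteq> {e' \<in> E. nbc_less e' f}" using lt by blast
    qed
    then have "card {e' \<in> E. nbc_less e' e} < card {e' \<in> E. nbc_less e' f}"
      by (rule psubset_card_mono[rotated]) (use finE in simp)
    then show ?thesis unfolding nbc_label_def by simp
  qed
  ultimately show False by simp
qed

end
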